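(* Let $k>0$ be an integer and let $a_0,a_1,\ldots,a_k$ be fixed integers. For each integer $n>k$ let $$P_{2n}(x)=x^n\Big(x^n+a_0+x^{-n}+\sum_{j=1}^k a_j\big(x^j+x^{-j}\big)\Big),$$ a monic reciprocal polynomial of degree $2n$ with integer coefficients. Then the limit $\lim_{n\to\infty} C(P_{2n})$ exists.
   Context: For a polynomial $P$ of degree $d$, let $I(P)$, $U(P)$, $E(P)$ denote the numbers of complex zeros of $P$ (counted with multiplicity) of modulus $<1$, $=1$, $>1$ respectively, so $I(P)+U(P)+E(P)=d$. For the polynomial $P_{2n}$ of degree $2n$, define $C(P_{2n})=\frac{I(P_{2n})+E(P_{2n})}{2n}$, the proportion of zeros that are not on the unit circle. *)

theory Defs
  imports "HOL-Analysis.Analysis" "HOL-Computational_Algebra.Polynomial"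
begin

definition zeros_in :: "complex poly \<Rightarrow> nat" where
  "zeros_in p = size (filter_mset (\<lambda>z. norm z < 1) (proots p))"
definition zeros_on :: "complex poly \<Rightarrow> nat" where
  "zeros_on p = size (filter_mset (\<lambda>z. norm z = 1) (proots p))"
definition zeros_out :: "complex poly \<Rightarrow> nat" where
  "zeros_out p = size (filter_mset (\<lambda>z. norm z > 1) (proots p))"

definition C_prop :: "complex poly \<Rightarrow> nat \<Rightarrow> real" where
  "C_prop p n = real (zeros_in p + zeros_out p) / real (2 * n)"

definition Ppoly :: "nat \<Rightarrow> (nat \<Rightarrow> int) \<Rightarrow> nat \<Rightarrow> complex poly" where
  "Ppoly k a n = monom 1 (2 * n) + monom (of_int (a 0)) n + 1
     + (\<Sum>j = 1..k. monom (of_int (a j)) (n + j) + monom (of_int (a j)) (n - j))"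

end

theory Submission
  imports Defs "HOL-Computational_Algebra.Fundamental_Theorem_Algebra"
begin


lemma cos_sin_int_pi:
  fixes m :: int
  shows "\<bar>cos (of_int m * pi)\<bar> = 1" "sin (of_int m * pi) = 0"
proof -
  have "cos (of_int m * pi) = cos (real (nat \<bar>m\<bar>) * pi)"
  proof (cases "m \<ge> 0")
    case True then show ?thesis by simp
  next
    case False
    then have "of_int m * pi = - (real (nat \<bar>m\<bar>) * pi)" by simp
    then show ?thesis by (metis cos_minus)
  qed
  then show "\<bar>cos (of_int m * pi)\<bar> = 1" by (simp only: cos_npi) simp
  show "sin (of_int m * pi) = 0" by (simp add: sin_times_pi_eq_0)
qed

lemma shift_abs:
  fixes m :: int
  shows "\<bar>sin (y + of_int m * pi)\<bar> = \<bar>sin y\<bar>" "\<bar>cos (y + of_int m * pi)\<bar> = \<bar>cos y\<bar>"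
  using cos_sin_int_pi[of m] by (simp_all add: sin_add cos_add abs_mult)

lemma small_sin:
  assumes "\<bar>y\<bar> \<le> pi/2" "\<bar>sin y\<bar> \<le> 1/2" shows "\<bar>y\<bar> \<le> pi/6"
proof (rule ccontr)
  assume "\<not> ?thesis"
  then consider "y > pi/6" | "y < - (pi/6)" by linarith
  then show False
  proof cases
    case 1
    have "sin (pi/6) < sin y" using 1 assms(1) by (subst sin_mono_less_eq) auto
    then show False using assms sin_30 by simp
  next
    case 2
    have "sin y < sin (-(pi/6))" using 2 assms(1) by (subst sin_mono_less_eq) auto
    then show False using assms sin_30 by simp
  qed
qed

lemma small_cos:
  assumes "\<bar>y\<bar> \<le> pi/6" shows "cos y \<ge> 1/2"
proof -
  have "cos (pi/6) \<le> cos \<bar>y\<bar>" using assms by (subst cos_mono_le_eq) auto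
  moreover have "cos \<bar>y\<bar> = cos y" by (cases "y \<ge> 0") auto
  moreover have "sqrt 3 / 2 \<ge> (1/2::real)" by (simp add: real_le_rsqrt)
  ultimately show ?thesis using cos_30 by linarith
qed

lemma rolle_count:
  fixes f g :: "real \<Rightarrow> real"
  assumes der: "\<And>x. (f has_real_derivative g x) (at x)"
    and fin: "finite {x\<in>{a..b}. g x = 0}"
    and A: "finite A" "A \<subseteq> {a..b}" "\<And>x. x \<in> A \<Longrightarrow> f x = 0"
  shows "card A \<le> card {x\<in>{a..b}. g x = 0} + 1"
  using A fin
proof (induction "card A" arbitrary: A b rule: less_induct)
  case less
  show ?case
  proof (cases "card A \<le> 1")
    case True then show ?thesis by simp
  next
    case False
    define M where "M = Max A"
    define A' where "A' = A - {M}"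
    have ne: "A \<noteq> {}" using False by auto
    have MA: "M \<in> A" unfolding M_def using ne less.prems by simp
    have cA': "card A' = card A - 1" unfolding A'_def using MA less.prems by simp
    have ne': "A' \<noteq> {}" using False cA' by auto
    have fA': "finite A'" unfolding A'_def using less.prems by simp
    define M' where "M' = Max A'"
    have M'A': "M' \<in> A'" unfolding M'_def using ne' fA' by simp
    have lt: "M' < M"
    proof -
      have "M' \<le> M" using M'A' unfolding A'_def M_def using less.prems by simp
      moreover have "M' \<noteq> M" using M'A' unfolding A'_def by simp
      ultimately show ?thesis by simp
    qed
    have fM: "f M = 0" "f M' = 0" using MA M'A' less.prems unfolding A'_def by auto
    obtain z where z: "M' < z" "z < M" "DERIV f z :> 0"
    proof -
      have "continuous_on {M'..M} f"
        using der by (meson DERIV_continuous continuous_at_imp_continuous_on)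
      moreover have "\<And>x. f differentiable (at x)" using der real_differentiable_def by blast
      ultimately show ?thesis using Rolle[of M' M f] lt fM that by auto
    qed
    have gz: "g z = 0" using DERIV_unique[OF der z(3)] by simp
    have sub: "A' \<subseteq> {a..M'}"
    proof
      fix x assume x: "x \<in> A'"
      then have "x \<le> M'" unfolding M'_def using fA' by simp
      moreover have "a \<le> x" using x less.prems(2) unfolding A'_def by auto
      ultimately show "x \<in> {a..M'}" by simp
    qed
    have "M' \<le> b" "a \<le> M'" using M'A' less.prems(2) unfolding A'_def by auto
    have zin: "z \<in> {x\<in>{a..b}. g x = 0}" using z gz \<open>a \<le> M'\<close> MA less.prems(2) by auto
    have sub2: "{x\<in>{a..M'}. g x = 0} \<subseteq> {x\<in>{a..b}. g x = 0} - {z}"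
      using \<open>M' \<le> b\<close> z by auto
    have fin2: "finite {x\<in>{a..M'}. g x = 0}" using finite_subset[OF sub2] less.prems(4) by auto
    have IH: "card A' \<le> card {x\<in>{a..M'}. g x = 0} + 1"
      using less.hyps[of A' M'] cA' False fA' sub less.prems(3) fin2 unfolding A'_def by auto
    have "card {x\<in>{a..M'}. g x = 0} \<le> card ({x\<in>{a..b}. g x = 0} - {z})"
      by (rule card_mono) (use sub2 less.prems(4) in auto)
    also have "\<dots> = card {x\<in>{a..b}. g x = 0} - 1" using zin less.prems(4) by simp
    finally have c1: "card {x\<in>{a..M'}. g x = 0} \<le> card {x\<in>{a..b}. g x = 0} - 1" .
    have "card {x\<in>{a..b}. g x = 0} \<ge> 1" using zin less.prems(4)
      by (metis One_nat_def Suc_leI card_gt_0_iff empty_iff)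
    then show ?thesis using c1 IH cA' False by linarith
  qed
qed

lemma sep_count:
  fixes S S' r r2 :: "real \<Rightarrow> real" and c :: real
  assumes c: "c > 0"
    and der: "\<And>x. (S has_real_derivative S' x) (at x)"
    and S: "\<And>x. S x = 2*c * sin (c*x) + r x" and S': "\<And>x. S' x = 2*c^2 * cos (c*x) + r2 x"
    and r: "\<And>x. \<bar>r x\<bar> \<le> c" and r2: "\<And>x. \<bar>r2 x\<bar> < c^2"
    and ab: "\<alpha> \<le> \<beta>"
  shows "finite {x\<in>{\<alpha>..\<beta>}. S x = 0} \<and> real (card {x\<in>{\<alpha>..\<beta>}. S x = 0}) \<le> c*(\<beta>-\<alpha>)/pi + 2"
proof -
  define Z where "Z = {x\<in>{\<alpha>..\<beta>}. S x = 0}"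
  define m where "m x = \<lfloor>c*x/pi + 1/2\<rfloor>" for x
  have key: "\<bar>c*x - of_int (m x) * pi\<bar> \<le> pi/6" if "S x = 0" for x
  proof -
    have "of_int (m x) \<le> c*x/pi + 1/2" "c*x/pi + 1/2 < of_int (m x) + 1" unfolding m_def by linarith+
    then have "of_int (m x) * pi \<le> c*x + pi/2" "c*x - pi/2 < of_int (m x) * pi"
      using pi_gt_zero by (simp_all add: field_simps)
    then have h1: "\<bar>c*x - of_int (m x) * pi\<bar> \<le> pi/2" by linarith
    have "\<bar>2*c * sin (c*x)\<bar> \<le> c" using that S r[of x] by (metis add.commute add_eq_0_iff abs_minus_cancel)
    then have "\<bar>sin (c*x)\<bar> \<le> 1/2" using c by (simp add: abs_mult)
    moreover have "\<bar>sin (c*x)\<bar> = \<bar>sin (c*x - of_int (m x) * pi)\<bar>"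
      using shift_abs(1)[of "c*x - of_int (m x) * pi" "m x"] by simp
    ultimately show ?thesis using small_sin h1 by simp
  qed
  have inj: "inj_on m Z"
  proof (rule inj_onI, rule ccontr)
    fix x1 x2 assume x: "x1 \<in> Z" "x2 \<in> Z" "m x1 = m x2" "x1 \<noteq> x2"
    have main: False if lt: "y1 < y2" and y: "y1 \<in> Z" "y2 \<in> Z" "m y1 = m y2" for y1 y2
    proof -
      obtain z where z: "y1 < z" "z < y2" "DERIV S z :> 0"
      proof -
        have "continuous_on {y1..y2} S"
          using der by (meson DERIV_continuous continuous_at_imp_continuous_on)
        moreover have "\<And>x. S differentiable (at x)" using der real_differentiable_def by blast
        ultimately show ?thesis using Rolle[of y1 y2 S] lt y that unfolding Z_def by auto
      qed
      have Sz: "S' z = 0" using DERIV_unique[OF der z(3)] by simp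
      have k1: "\<bar>c*y1 - of_int (m y1) * pi\<bar> \<le> pi/6" "\<bar>c*y2 - of_int (m y1) * pi\<bar> \<le> pi/6"
        using key[of y1] key[of y2] y unfolding Z_def by auto
      have "c*y1 \<le> c*z" "c*z \<le> c*y2" using z c by auto
      then have "\<bar>c*z - of_int (m y1) * pi\<bar> \<le> pi/6" using k1 by linarith
      then have "cos (c*z - of_int (m y1) * pi) \<ge> 1/2" by (rule small_cos)
      moreover have "\<bar>cos (c*z)\<bar> = \<bar>cos (c*z - of_int (m y1) * pi)\<bar>"
        using shift_abs(2)[of "c*z - of_int (m y1) * pi" "m y1"] by simp
      ultimately have "\<bar>cos (c*z)\<bar> \<ge> 1/2" by linarith
      then have "\<bar>2*c^2 * cos (c*z)\<bar> \<ge> c^2" using c by (simp add: abs_mult)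
      then show False using Sz S'[of z] r2[of z] by linarith
    qed
    show False
    proof (cases "x1 < x2")
      case True then show False using main x by blast
    next
      case False then have "x2 < x1" using x by simp
      then show False using main x by metis
    qed
  qed
  have img: "m ` Z \<subseteq> {m \<alpha> .. m \<beta>}"
  proof
    fix y assume "y \<in> m ` Z"
    then obtain x where x: "x \<in> Z" "y = m x" by auto
    have "c*\<alpha>/pi + 1/2 \<le> c*x/pi + 1/2" "c*x/pi + 1/2 \<le> c*\<beta>/pi + 1/2"
      using x c pi_gt_zero unfolding Z_def by (auto simp: divide_right_mono)
    then show "y \<in> {m \<alpha> .. m \<beta>}" unfolding x m_def by (auto intro: floor_mono)
  qed
  have finZ: "finite Z"
    using inj finite_subset[OF img] finite_atLeastAtMost_int finite_imageD by blast
  have "card Z = card (m ` Z)" using inj card_image by metis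
  also have "\<dots> \<le> card {m \<alpha> .. m \<beta>}" by (rule card_mono) (use img in auto)
  also have "\<dots> = nat (m \<beta> + 1 - m \<alpha>)" by simp
  finally have cZ: "card Z \<le> nat (m \<beta> + 1 - m \<alpha>)" .
  have "of_int (m \<beta>) \<le> c*\<beta>/pi + 1/2" "c*\<alpha>/pi + 1/2 < of_int (m \<alpha>) + 1" unfolding m_def by linarith+
  then have "real_of_int (m \<beta> + 1 - m \<alpha>) \<le> c*(\<beta>-\<alpha>)/pi + 2"
    by (simp add: diff_divide_distrib right_diff_distrib)
  then have "real (card Z) \<le> c*(\<beta>-\<alpha>)/pi + 2" using cZ
  proof -
    have "c*(\<beta>-\<alpha>)/pi \<ge> 0" using ab c by simp
    moreover have "real (nat (m \<beta> + 1 - m \<alpha>)) = max 0 (real_of_int (m \<beta> + 1 - m \<alpha>))"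
      by (cases "m \<beta> + 1 - m \<alpha> \<ge> 0") auto
    moreover have "real (card Z) \<le> real (nat (m \<beta> + 1 - m \<alpha>))" using cZ by linarith
    ultimately show ?thesis using \<open>real_of_int (m \<beta> + 1 - m \<alpha>) \<le> _\<close> by linarith
  qed
  then show ?thesis using finZ unfolding Z_def by simp
qed

lemma sign_count:
  fixes F q :: "real \<Rightarrow> real" and c :: real
  assumes c: "c > 0"
    and F: "\<And>x. F x = 2*cos(c*x) + q x"
    and cont: "continuous_on {\<alpha>..\<beta>} q"
    and q: "\<And>x. x \<in> {\<alpha>..\<beta>} \<Longrightarrow> \<bar>q x\<bar> < 2"
  shows "\<exists>Y. Y \<subseteq> {x\<in>{\<alpha><..<\<beta>}. F x = 0} \<and> finite Y \<and> real (card Y) \<ge> c*(\<beta>-\<alpha>)/pi - 2"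
proof -
  define ms where "ms = {\<lceil>c*\<alpha>/pi\<rceil> ..< \<lfloor>c*\<beta>/pi\<rfloor>}"
  define a where "a m = of_int m * pi / c" for m :: int
  have ab: "\<alpha> \<le> a m \<and> a (m+1) \<le> \<beta> \<and> a m < a (m+1)" if "m \<in> ms" for m
  proof -
    have "c*\<alpha>/pi \<le> of_int m" using that unfolding ms_def
      by (auto simp: ceiling_le_iff)
    moreover have "m + 1 \<le> \<lfloor>c*\<beta>/pi\<rfloor>" using that unfolding ms_def by auto
    then have "of_int (m+1) \<le> c*\<beta>/pi" by (simp only: le_floor_iff)
    ultimately show ?thesis unfolding a_def using c pi_gt_zero by (auto simp: field_simps)
  qed
  have ex: "\<exists>x. a m < x \<and> x < a (m+1) \<and> F x = 0" if mms: "m \<in> ms" for m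
  proof -
    have Fc: "continuous_on {a m..a (m+1)} F"
    proof -
      have "continuous_on {a m..a (m+1)} q" using ab[OF mms] by (intro continuous_on_subset[OF cont]) auto
      then show ?thesis unfolding F[abs_def] by (intro continuous_intros)
    qed
    have ca: "c * a m = of_int m * pi" "c * a (m+1) = of_int m * pi + pi" using c unfolding a_def
      by (auto simp: field_simps)
    have cm: "cos (of_int m * pi + pi) = - cos (of_int m * pi)" by (simp add: cos_add)
    have qa: "\<bar>q (a m)\<bar> < 2" "\<bar>q (a (m+1))\<bar> < 2" using q ab[OF mms] by auto
    have "F (a m) * F (a (m+1)) < 0"
    proof -
      have "\<bar>cos (of_int m * pi)\<bar> = 1" by (rule cos_sin_int_pi)
      then consider "cos (of_int m * pi) = 1" | "cos (of_int m * pi) = -1" by linarith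
      then show ?thesis
      proof cases
        case 1
        then have "F (a m) > 0" "F (a (m+1)) < 0" using F ca cm qa by (auto simp: abs_less_iff)
        then show ?thesis by (simp add: mult_pos_neg)
      next
        case 2
        then have "F (a m) < 0" "F (a (m+1)) > 0" using F ca cm qa by (auto simp: abs_less_iff)
        then show ?thesis by (simp add: mult_neg_pos)
      qed
    qed
    then consider "F (a m) < 0" "F (a (m+1)) > 0" | "F (a m) > 0" "F (a (m+1)) < 0"
      by (auto simp: mult_less_0_iff)
    then show ?thesis
    proof cases
      case 1
      obtain x where "a m \<le> x" "x \<le> a (m+1)" "F x = 0"
        using IVT'[of F "a m" 0 "a (m+1)"] 1 ab[OF mms] Fc by auto
      moreover have "x \<noteq> a m" "x \<noteq> a (m+1)" using 1 \<open>F x = 0\<close> by auto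
      ultimately show ?thesis by (intro exI[of _ x]) auto
    next
      case 2
      obtain x where "a m \<le> x" "x \<le> a (m+1)" "F x = 0"
        using IVT2'[of F "a (m+1)" 0 "a m"] 2 ab[OF mms] Fc by auto
      moreover have "x \<noteq> a m" "x \<noteq> a (m+1)" using 2 \<open>F x = 0\<close> by auto
      ultimately show ?thesis by (intro exI[of _ x]) auto
    qed
  qed
  define z where "z m = (SOME x. a m < x \<and> x < a (m+1) \<and> F x = 0)" for m
  have z: "a m < z m \<and> z m < a (m+1) \<and> F (z m) = 0" if "m \<in> ms" for m
    unfolding z_def using someI_ex[OF ex[OF that]] .
  have amono: "a m1 \<le> a m2" if "m1 \<le> m2" for m1 m2
    unfolding a_def using that c pi_gt_zero by (auto intro!: divide_right_mono mult_right_mono)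
  have inj: "inj_on z ms"
  proof (rule inj_onI, rule ccontr)
    fix m1 m2 assume m: "m1 \<in> ms" "m2 \<in> ms" "z m1 = z m2" "m1 \<noteq> m2"
    have *: False if "m1 < m2" "m1 \<in> ms" "m2 \<in> ms" "z m1 = z m2" for m1 m2
    proof -
      have "a (m1+1) \<le> a m2" using amono that by simp
      then show False using z[OF that(2)] z[OF that(3)] that(4) by linarith
    qed
    from m(4) have "m1 < m2 \<or> m2 < m1" by auto
    then show False using *[of m1 m2] *[of m2 m1] m by auto
  qed
  define Y where "Y = z ` ms"
  have "Y \<subseteq> {x\<in>{\<alpha><..<\<beta>}. F x = 0}"
  proof
    fix y assume "y \<in> Y"
    then obtain m where m: "m \<in> ms" "y = z m" unfolding Y_def by auto
    show "y \<in> {x\<in>{\<alpha><..<\<beta>}. F x = 0}" using z[OF m(1)] ab[OF m(1)] m(2) by auto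
  qed
  moreover have "finite Y" unfolding Y_def ms_def by simp
  moreover have "real (card Y) \<ge> c*(\<beta>-\<alpha>)/pi - 2"
  proof -
    have "card Y = card ms" unfolding Y_def using inj card_image by metis
    also have "\<dots> = nat (\<lfloor>c*\<beta>/pi\<rfloor> - \<lceil>c*\<alpha>/pi\<rceil>)" unfolding ms_def by simp
    finally have "real (card Y) \<ge> real_of_int (\<lfloor>c*\<beta>/pi\<rfloor> - \<lceil>c*\<alpha>/pi\<rceil>)" by simp
    moreover have "real_of_int (\<lfloor>c*\<beta>/pi\<rfloor> - \<lceil>c*\<alpha>/pi\<rceil>) \<ge> c*\<beta>/pi - 1 - (c*\<alpha>/pi + 1)"
      using floor_correct[of "c*\<beta>/pi"] ceiling_correct[of "c*\<alpha>/pi"] by linarith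
    ultimately show ?thesis by (simp add: diff_divide_distrib right_diff_distrib)
  qed
  ultimately show ?thesis by blast
qed



definition theta :: "complex poly \<Rightarrow> complex poly" where
  "theta p = pCons 0 (pderiv p)"

lemma theta_add: "theta (p + q) = theta p + theta q"
  unfolding theta_def by (simp add: pderiv_add)

lemma theta_sum: "theta (sum f A) = (\<Sum>x\<in>A. theta (f x))"
  by (induction A rule: infinite_finite_induct) (simp_all add: theta_add, simp_all add: theta_def)

lemma theta_monom: "theta (monom c m) = monom (of_nat m * c) m"
proof (cases m)
  case 0 then show ?thesis by (simp add: theta_def pderiv_monom)
next
  case (Suc m')
  have "theta (monom c m) = pCons 0 (monom (of_nat m * c) m')" by (simp add: theta_def pderiv_monom Suc)
  then show ?thesis by (simp add: monom_Suc Suc)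
qed

definition PW :: "nat \<Rightarrow> (nat \<Rightarrow> int) \<Rightarrow> nat \<Rightarrow> (nat \<Rightarrow> complex) \<Rightarrow> complex poly" where
  "PW k a n w = monom (w (2*n)) (2*n) + monom (of_int (a 0) * w n) n + monom (w 0) 0
     + (\<Sum>j = 1..k. monom (of_int (a j) * w (n+j)) (n + j) + monom (of_int (a j) * w (n-j)) (n - j))"

lemma Ppoly_PW: "Ppoly k a n = PW k a n (\<lambda>_. 1)"
  unfolding Ppoly_def PW_def by (simp add: monom_0 one_pCons)

lemma theta_PW: "theta (PW k a n w) = PW k a n (\<lambda>m. of_nat m * w m)"
  unfolding PW_def by (simp add: theta_add theta_sum theta_monom algebra_simps)

lemma cis_pow_split:
  assumes "j \<le> n"
  shows "cis t ^ (n+j) = cis t ^ n * cis (real j * t)" "cis t ^ (n-j) = cis t ^ n * cis (- (real j * t))"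
    "cis t ^ (2*n) = cis t ^ n * cis (real n * t)" "(1::complex) = cis t ^ n * cis (- (real n * t))"
proof -
  show "cis t ^ (n+j) = cis t ^ n * cis (real j * t)" by (simp only: power_add Complex.DeMoivre)
  have "cis t ^ n = cis t ^ (n-j) * cis t ^ j" using assms by (simp add: power_add[symmetric])
  moreover have "cis t ^ j = cis (real j * t)" by (rule Complex.DeMoivre)
  ultimately have "cis t ^ n * cis (- (real j * t)) = cis t ^ (n-j) * (cis (real j * t) * cis (- (real j * t)))"
    by (simp only: mult.assoc)
  also have "\<dots> = cis t ^ (n-j)" by (simp add: cis_mult)
  finally show "cis t ^ (n-j) = cis t ^ n * cis (- (real j * t))" by simp
  show "cis t ^ (2*n) = cis t ^ n * cis (real n * t)" by (simp only: Complex.DeMoivre mult_2 power_add)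
  show "(1::complex) = cis t ^ n * cis (- (real n * t))" by (simp only: Complex.DeMoivre cis_mult) simp
qed

lemma poly_PW:
  assumes "k \<le> n"
  shows "poly (PW k a n w) (cis t) = cis t ^ n * (w (2*n) * cis (real n * t) + of_int (a 0) * w n
     + w 0 * cis (- (real n * t))
     + (\<Sum>j = 1..k. of_int (a j) * (w (n+j) * cis (real j * t) + w (n-j) * cis (- (real j * t)))))"
proof -
  have s: "(\<Sum>j = 1..k. of_int (a j) * w (n+j) * cis t ^ (n + j) + of_int (a j) * w (n-j) * cis t ^ (n - j))
    = cis t ^ n * (\<Sum>j = 1..k. of_int (a j) * (w (n+j) * cis (real j * t) + w (n-j) * cis (- (real j * t))))"
    unfolding sum_distrib_left
  proof (rule sum.cong)
    fix j assume "j \<in> {1..k}"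
    then have "j \<le> n" using assms by simp
    note e = cis_pow_split(1,2)[OF this, of t]
    show "of_int (a j) * w (n+j) * cis t ^ (n + j) + of_int (a j) * w (n-j) * cis t ^ (n - j)
      = cis t ^ n * (of_int (a j) * (w (n+j) * cis (real j * t) + w (n-j) * cis (- (real j * t))))"
      unfolding e by (simp add: algebra_simps)
  qed simp
  have e1: "cis t ^ (2*n) = cis t ^ n * cis (real n * t)" "(1::complex) = cis t ^ n * cis (- (real n * t))"
    using cis_pow_split(3,4)[OF le_refl[of n]] by auto
  have "poly (PW k a n w) (cis t) = w (2*n) * cis t ^ (2*n) + of_int (a 0) * w n * cis t ^ n + w 0 * 1
     + (\<Sum>j = 1..k. of_int (a j) * w (n+j) * cis t ^ (n + j) + of_int (a j) * w (n-j) * cis t ^ (n - j))"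
    unfolding PW_def poly_add poly_monom poly_sum power_0 by simp
  also have "\<dots> = w (2*n) * (cis t ^ n * cis (real n * t)) + of_int (a 0) * w n * cis t ^ n
     + w 0 * (cis t ^ n * cis (- (real n * t)))
     + cis t ^ n * (\<Sum>j = 1..k. of_int (a j) * (w (n+j) * cis (real j * t) + w (n-j) * cis (- (real j * t))))"
    by (simp only: s e1[symmetric])
  finally show ?thesis by (simp add: algebra_simps)
qed



definition qf :: "nat \<Rightarrow> (nat \<Rightarrow> int) \<Rightarrow> real \<Rightarrow> real" where
  "qf k a t = of_int (a 0) + (\<Sum>j=1..k. 2 * of_int (a j) * cos (real j * t))"
definition rf :: "nat \<Rightarrow> (nat \<Rightarrow> int) \<Rightarrow> real \<Rightarrow> real" where
  "rf k a t = (\<Sum>j=1..k. 2 * real j * of_int (a j) * sin (real j * t))"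
definition r2f :: "nat \<Rightarrow> (nat \<Rightarrow> int) \<Rightarrow> real \<Rightarrow> real" where
  "r2f k a t = (\<Sum>j=1..k. 2 * (real j)^2 * of_int (a j) * cos (real j * t))"
definition ff :: "nat \<Rightarrow> (nat \<Rightarrow> int) \<Rightarrow> nat \<Rightarrow> real \<Rightarrow> real" where
  "ff k a n t = 2 * cos (real n * t) + qf k a t"
definition ss :: "nat \<Rightarrow> (nat \<Rightarrow> int) \<Rightarrow> nat \<Rightarrow> real \<Rightarrow> real" where
  "ss k a n t = 2 * real n * sin (real n * t) + rf k a t"
definition cc :: "nat \<Rightarrow> (nat \<Rightarrow> int) \<Rightarrow> nat \<Rightarrow> real \<Rightarrow> real" where
  "cc k a n t = 2 * (real n)^2 * cos (real n * t) + r2f k a t"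

lemma cis_pm: "cis x + cis (-x) = complex_of_real (2 * cos x)" "cis x - cis (-x) = \<i> * complex_of_real (2 * sin x)"
  by (simp_all add: complex_eq_iff)

lemma term0: "of_int b * (cis x + cis (-x)) = complex_of_real (2 * of_int b * cos x)"
  by (simp add: cis_pm)

lemma term1: "of_int b * ((of_nat n + of_nat j) * cis x + (of_nat n - of_nat j) * cis (-x))
  = of_nat n * complex_of_real (2 * of_int b * cos x) + \<i> * complex_of_real (2 * real j * of_int b * sin x)"
proof -
  have "of_int b * ((of_nat n + of_nat j) * cis x + (of_nat n - of_nat j) * cis (-x))
    = of_int b * (of_nat n * (cis x + cis (-x)) + of_nat j * (cis x - cis (-x)))" by (simp add: algebra_simps)
  also have "\<dots> = of_nat n * complex_of_real (2 * of_int b * cos x) + \<i> * complex_of_real (2 * real j * of_int b * sin x)"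
    unfolding cis_pm by (simp add: algebra_simps)
  finally show ?thesis .
qed

lemma term2: "of_int b * ((of_nat n + of_nat j)^2 * cis x + (of_nat n - of_nat j)^2 * cis (-x))
  = (of_nat n)^2 * complex_of_real (2 * of_int b * cos x) + 2 * of_nat n * \<i> * complex_of_real (2 * real j * of_int b * sin x)
    + complex_of_real (2 * (real j)^2 * of_int b * cos x)"
proof -
  have "of_int b * ((of_nat n + of_nat j)^2 * cis x + (of_nat n - of_nat j)^2 * cis (-x))
    = of_int b * ((of_nat n)^2 * (cis x + cis (-x)) + 2 * of_nat n * of_nat j * (cis x - cis (-x))
       + (of_nat j)^2 * (cis x + cis (-x)))" by (simp add: algebra_simps power2_eq_square)
  also have "\<dots> = (of_nat n)^2 * complex_of_real (2 * of_int b * cos x) + 2 * of_nat n * \<i> * complex_of_real (2 * real j * of_int b * sin x)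
    + complex_of_real (2 * (real j)^2 * of_int b * cos x)"
    unfolding cis_pm by (simp add: algebra_simps)
  finally show ?thesis .
qed

lemma eval0:
  assumes "k \<le> n"
  shows "poly (Ppoly k a n) (cis t) = cis t ^ n * complex_of_real (ff k a n t)"
proof -
  have "(\<Sum>j = 1..k. of_int (a j) * (1 * cis (real j * t) + 1 * cis (- (real j * t))))
     = complex_of_real (\<Sum>j=1..k. 2 * of_int (a j) * cos (real j * t))"
    unfolding of_real_sum by (rule sum.cong) (simp_all add: term0)
  moreover have "cis (real n * t) + cis (- (real n * t)) = complex_of_real (2 * cos (real n * t))" by (rule cis_pm)
  ultimately show ?thesis unfolding Ppoly_PW poly_PW[OF assms] ff_def qf_def
    by (simp add: algebra_simps)
qed

lemma eval1:
  assumes "k \<le> n"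
  shows "poly (theta (Ppoly k a n)) (cis t) = cis t ^ n * (of_nat n * complex_of_real (ff k a n t) + \<i> * complex_of_real (ss k a n t))"
proof -
  have "(\<Sum>j = 1..k. of_int (a j) * (of_nat (n+j) * 1 * cis (real j * t) + of_nat (n-j) * 1 * cis (- (real j * t))))
     = (\<Sum>j = 1..k. of_nat n * complex_of_real (2 * of_int (a j) * cos (real j * t)) + \<i> * complex_of_real (2 * real j * of_int (a j) * sin (real j * t)))"
  proof (rule sum.cong)
    fix j assume "j \<in> {1..k}"
    then have "j \<le> n" using assms by simp
    then have "(of_nat (n-j) :: complex) = of_nat n - of_nat j" by (simp add: of_nat_diff)
    then show "of_int (a j) * (of_nat (n+j) * 1 * cis (real j * t) + of_nat (n-j) * 1 * cis (- (real j * t)))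
      = of_nat n * complex_of_real (2 * of_int (a j) * cos (real j * t)) + \<i> * complex_of_real (2 * real j * of_int (a j) * sin (real j * t))"
      using term1[of "a j" n j "real j * t"] by simp
  qed simp
  also have "\<dots> = of_nat n * complex_of_real (\<Sum>j=1..k. 2 * of_int (a j) * cos (real j * t)) + \<i> * complex_of_real (rf k a t)"
    unfolding rf_def of_real_sum sum.distrib sum_distrib_left ..
  finally have s: "(\<Sum>j = 1..k. of_int (a j) * (of_nat (n+j) * 1 * cis (real j * t) + of_nat (n-j) * 1 * cis (- (real j * t))))
     = of_nat n * complex_of_real (\<Sum>j=1..k. 2 * of_int (a j) * cos (real j * t)) + \<i> * complex_of_real (rf k a t)" .
  have m: "of_nat (2*n) * 1 * cis (real n * t) + of_nat 0 * 1 * cis (- (real n * t))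
    = of_nat n * complex_of_real (2 * cos (real n * t)) + \<i> * complex_of_real (2 * real n * sin (real n * t))"
    using term1[of 1 n n "real n * t"] by simp
  show ?thesis unfolding Ppoly_PW theta_PW poly_PW[OF assms] ff_def qf_def ss_def
    using s m by (simp add: algebra_simps)
qed

lemma eval2:
  assumes "k \<le> n"
  shows "poly (theta (theta (Ppoly k a n))) (cis t) = cis t ^ n * ((of_nat n)^2 * complex_of_real (ff k a n t)
     + 2 * of_nat n * \<i> * complex_of_real (ss k a n t) + complex_of_real (cc k a n t))"
proof -
  have "(\<Sum>j = 1..k. of_int (a j) * (of_nat (n+j) * (of_nat (n+j) * 1) * cis (real j * t) + of_nat (n-j) * (of_nat (n-j) * 1) * cis (- (real j * t))))
     = (\<Sum>j = 1..k. (of_nat n)^2 * complex_of_real (2 * of_int (a j) * cos (real j * t)) + 2 * of_nat n * \<i> * complex_of_real (2 * real j * of_int (a j) * sin (real j * t))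
    + complex_of_real (2 * (real j)^2 * of_int (a j) * cos (real j * t)))"
  proof (rule sum.cong)
    fix j assume "j \<in> {1..k}"
    then have "j \<le> n" using assms by simp
    then have "(of_nat (n-j) :: complex) = of_nat n - of_nat j" by (simp add: of_nat_diff)
    then show "of_int (a j) * (of_nat (n+j) * (of_nat (n+j) * 1) * cis (real j * t) + of_nat (n-j) * (of_nat (n-j) * 1) * cis (- (real j * t)))
      = (of_nat n)^2 * complex_of_real (2 * of_int (a j) * cos (real j * t)) + 2 * of_nat n * \<i> * complex_of_real (2 * real j * of_int (a j) * sin (real j * t))
    + complex_of_real (2 * (real j)^2 * of_int (a j) * cos (real j * t))"
      using term2[of "a j" n j "real j * t"] by (simp add: power2_eq_square)
  qed simp
  also have "\<dots> = (of_nat n)^2 * complex_of_real (\<Sum>j=1..k. 2 * of_int (a j) * cos (real j * t)) + 2 * of_nat n * \<i> * complex_of_real (rf k a t)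
     + complex_of_real (r2f k a t)"
    unfolding rf_def r2f_def of_real_sum sum.distrib sum_distrib_left ..
  finally have s: "(\<Sum>j = 1..k. of_int (a j) * (of_nat (n+j) * (of_nat (n+j) * 1) * cis (real j * t) + of_nat (n-j) * (of_nat (n-j) * 1) * cis (- (real j * t))))
     = (of_nat n)^2 * complex_of_real (\<Sum>j=1..k. 2 * of_int (a j) * cos (real j * t)) + 2 * of_nat n * \<i> * complex_of_real (rf k a t)
     + complex_of_real (r2f k a t)" .
  have m: "of_nat (2*n) * (of_nat (2*n) * 1) * cis (real n * t) + of_nat 0 * (of_nat 0 * 1) * cis (- (real n * t))
    = (of_nat n)^2 * complex_of_real (2 * cos (real n * t)) + 2 * of_nat n * \<i> * complex_of_real (2 * real n * sin (real n * t))
    + complex_of_real (2 * (real n)^2 * cos (real n * t))"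
    using term2[of 1 n n "real n * t"] by (simp add: power2_eq_square)
  show ?thesis unfolding Ppoly_PW theta_PW poly_PW[OF assms] ff_def qf_def ss_def cc_def
    using s m by (simp add: algebra_simps power2_eq_square)
qed



lemma four_n: "(2 * r * cos x)^2 + (2 * r * sin x)^2 = 4 * (r::real)^2"
proof -
  have "r^2 * (cos x)^2 + r^2 * (sin x)^2 = r^2" by (metis distrib_left sin_cos_squared_add2 mult_1_right)
  then show ?thesis by (simp add: power_mult_distrib)
qed

lemma qf_deriv: "(qf k a has_real_derivative - rf k a t) (at t)"
proof -
  have d: "((\<lambda>z. 2 * of_int (a j) * cos (real j * z)) has_real_derivative 2 * of_int (a j) * (- sin (real j * t) * real j)) (at t)" for j
    by (rule derivative_eq_intros refl | simp)+
  have "((\<lambda>t. (\<Sum>j=1..k. 2 * of_int (a j) * cos (real j * t))) has_real_derivative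
     (\<Sum>j=1..k. 2 * of_int (a j) * (- sin (real j * t) * real j))) (at t)"
    using DERIV_sum[where S="{1..k}" and f="\<lambda>z j. 2 * of_int (a j) * cos (real j * z)"
      and f'="\<lambda>j. 2 * of_int (a j) * (- sin (real j * t) * real j)" and F="at t"] d by simp
  then have "((\<lambda>t. of_int (a 0) + (\<Sum>j=1..k. 2 * of_int (a j) * cos (real j * t))) has_real_derivative
     0 + (\<Sum>j=1..k. 2 * of_int (a j) * (- sin (real j * t) * real j))) (at t)"
    by (rule DERIV_add[OF DERIV_const])
  moreover have "0 + (\<Sum>j=1..k. 2 * of_int (a j) * (- sin (real j * t) * real j)) = - rf k a t"
    unfolding rf_def by (simp add: sum_negf[symmetric] algebra_simps)
  ultimately have D: "((\<lambda>t. of_int (a 0) + (\<Sum>j=1..k. 2 * of_int (a j) * cos (real j * t))) has_real_derivative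
     - rf k a t) (at t)" by simp
  have qfeq: "qf k a = (\<lambda>t. of_int (a 0) + (\<Sum>j=1..k. 2 * of_int (a j) * cos (real j * t)))"
    by (rule ext) (simp add: qf_def)
  show ?thesis by (subst qfeq) (rule D)
qed

lemma rf_deriv: "(rf k a has_real_derivative r2f k a t) (at t)"
proof -
  have d: "((\<lambda>z. 2 * real j * of_int (a j) * sin (real j * z)) has_real_derivative 2 * real j * of_int (a j) * (cos (real j * t) * real j)) (at t)" for j
    by (rule derivative_eq_intros refl | simp)+
  have "((\<lambda>t. (\<Sum>j=1..k. 2 * real j * of_int (a j) * sin (real j * t))) has_real_derivative
     (\<Sum>j=1..k. 2 * real j * of_int (a j) * (cos (real j * t) * real j))) (at t)"
    using DERIV_sum[where S="{1..k}" and f="\<lambda>z j. 2 * real j * of_int (a j) * sin (real j * z)"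
      and f'="\<lambda>j. 2 * real j * of_int (a j) * (cos (real j * t) * real j)" and F="at t"] d by simp
  moreover have "(\<Sum>j=1..k. 2 * real j * of_int (a j) * (cos (real j * t) * real j)) = r2f k a t"
    unfolding r2f_def by (simp add: algebra_simps power2_eq_square)
  ultimately have D: "((\<lambda>t. (\<Sum>j=1..k. 2 * real j * of_int (a j) * sin (real j * t))) has_real_derivative
     r2f k a t) (at t)" by simp
  have rfeq: "rf k a = (\<lambda>t. (\<Sum>j=1..k. 2 * real j * of_int (a j) * sin (real j * t)))"
    by (rule ext) (simp add: rf_def)
  show ?thesis by (subst rfeq) (rule D)
qed

lemma ff_deriv: "(ff k a n has_real_derivative - ss k a n t) (at t)"
proof -
  have "((\<lambda>t. 2 * cos (real n * t) + qf k a t) has_real_derivative 2 * (- sin (real n * t) * real n) + - rf k a t) (at t)"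
  proof (rule DERIV_add[OF _ qf_deriv])
    show "((\<lambda>t. 2 * cos (real n * t)) has_real_derivative 2 * (- sin (real n * t) * real n)) (at t)"
      by (rule derivative_eq_intros refl | simp)+
  qed
  then show ?thesis unfolding ff_def[abs_def] ss_def by (simp add: algebra_simps)
qed

lemma ss_deriv: "(ss k a n has_real_derivative cc k a n t) (at t)"
proof -
  have "((\<lambda>t. 2 * real n * sin (real n * t) + rf k a t) has_real_derivative 2 * real n * (cos (real n * t) * real n) + r2f k a t) (at t)"
  proof (rule DERIV_add[OF _ rf_deriv])
    show "((\<lambda>t. 2 * real n * sin (real n * t)) has_real_derivative 2 * real n * (cos (real n * t) * real n)) (at t)"
      by (rule derivative_eq_intros refl | simp)+
  qed
  then show ?thesis unfolding ss_def[abs_def] cc_def by (simp add: algebra_simps power2_eq_square)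
qed

lemma qf_cont: "continuous_on S (qf k a)"
  using qf_deriv by (meson DERIV_continuous continuous_at_imp_continuous_on)

definition B1 :: "nat \<Rightarrow> (nat \<Rightarrow> int) \<Rightarrow> real" where "B1 k a = (\<Sum>j=1..k. 2 * real j * \<bar>of_int (a j)\<bar>)"
definition B2 :: "nat \<Rightarrow> (nat \<Rightarrow> int) \<Rightarrow> real" where "B2 k a = (\<Sum>j=1..k. 2 * (real j)^2 * \<bar>of_int (a j)\<bar>)"

lemma rf_bound: "\<bar>rf k a t\<bar> \<le> B1 k a"
  unfolding rf_def B1_def
proof (rule order_trans[OF sum_abs], rule sum_mono)
  fix j show "\<bar>2 * real j * of_int (a j) * sin (real j * t)\<bar> \<le> 2 * real j * \<bar>of_int (a j)\<bar>"
    by (simp add: abs_mult mult_left_le)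
qed

lemma r2f_bound: "\<bar>r2f k a t\<bar> \<le> B2 k a"
  unfolding r2f_def B2_def
proof (rule order_trans[OF sum_abs], rule sum_mono)
  fix j show "\<bar>2 * (real j)^2 * of_int (a j) * cos (real j * t)\<bar> \<le> 2 * (real j)^2 * \<bar>of_int (a j)\<bar>"
    by (simp add: abs_mult mult_left_le)
qed

lemma sq_le: "\<bar>x\<bar> \<le> (y::real) \<Longrightarrow> x^2 \<le> y^2"
  by (metis power2_abs power_mono abs_ge_zero)

lemma B1_nonneg: "B1 k a \<ge> 0" unfolding B1_def by (intro sum_nonneg) auto
lemma B2_nonneg: "B2 k a \<ge> 0" unfolding B2_def by (intro sum_nonneg) auto

lemma ev_real_gt: "eventually (\<lambda>n. X < real n) sequentially"
proof -
  obtain N :: nat where "X < real N" using reals_Archimedean2 by blast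
  then show ?thesis by (intro eventually_sequentiallyI[of N]) auto
qed

lemma degree_Ppoly:
  assumes "k < n" shows "degree (Ppoly k a n) = 2*n"
proof -
  define R where "R = monom (of_int (a 0)) n + 1
     + (\<Sum>j = 1..k. monom (of_int (a j) :: complex) (n + j) + monom (of_int (a j)) (n - j))"
  have "Ppoly k a n = monom 1 (2*n) + R" unfolding Ppoly_def R_def by (simp add: algebra_simps)
  moreover have "degree R \<le> n + k" unfolding R_def
    by (intro degree_add_le degree_sum_le order_trans[OF degree_monom_le]) auto
  moreover have "degree (monom (1::complex) (2*n)) = 2*n" by (simp add: degree_monom_eq)
  ultimately show ?thesis using assms by (simp add: degree_add_eq_left)
qed

lemma Ppoly_nz: "k < n \<Longrightarrow> Ppoly k a n \<noteq> 0"
  using degree_Ppoly[of k n a] by auto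

lemma order_bound:
  assumes kn: "k < n" and big: "4 * (real n)^2 > (B1 k a)^2 + (B2 k a)^2" and f0: "ff k a n t = 0"
  shows "order (cis t) (Ppoly k a n) \<le> 1 + (if ss k a n t = 0 then 1 else 0)"
proof -
  define P where "P = Ppoly k a n"
  define x where "x = cis t"
  have P0: "P \<noteq> 0" unfolding P_def using Ppoly_nz kn by auto
  have xn: "x ^ n \<noteq> 0" unfolding x_def by simp
  have s0: "ss k a n t = 0" if "order x P \<ge> 2"
  proof -
    have "poly P x = 0" using that order_root[of P x] by auto
    then have "order x P = Suc (order x (pderiv P))" using order_pderiv P0 by blast
    then have "poly (pderiv P) x = 0" using that order_root[of "pderiv P" x] by auto
    then have "poly (theta P) x = 0" unfolding theta_def by simp
    then have "of_nat n * complex_of_real (ff k a n t) + \<i> * complex_of_real (ss k a n t) = 0"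
      using eval1[of k n a t] kn xn unfolding P_def x_def by simp
    then show ?thesis using f0 by (simp add: complex_eq_iff)
  qed
  have le2: "order x P \<le> 2"
  proof (rule ccontr)
    assume "\<not> ?thesis"
    then have o3: "order x P \<ge> 3" by simp
    have "poly P x = 0" using o3 order_root[of P x] by auto
    then have oP: "order x P = Suc (order x (pderiv P))" using order_pderiv P0 by blast
    then have p1: "poly (pderiv P) x = 0" using o3 order_root[of "pderiv P" x] by auto
    have p2: "poly (pderiv (pderiv P)) x = 0"
    proof (cases "pderiv P = 0")
      case True then show ?thesis by simp
    next
      case False
      then have "order x (pderiv P) = Suc (order x (pderiv (pderiv P)))" using order_pderiv p1 by blast
      then show ?thesis using o3 oP order_root[of "pderiv (pderiv P)" x] by auto
    qed
    have "poly (theta (theta P)) x = 0" unfolding theta_def using p1 p2 by (simp add: pderiv_pCons)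
    then have e: "(of_nat n)^2 * complex_of_real (ff k a n t)
     + 2 * of_nat n * \<i> * complex_of_real (ss k a n t) + complex_of_real (cc k a n t) = 0"
      using eval2[of k n a t] kn xn unfolding P_def x_def by simp
    have ss0: "ss k a n t = 0" using s0 o3 by simp
    have cc0: "cc k a n t = 0" using e f0 ss0 by (simp add: complex_eq_iff)
    have npos: "real n > 0" using kn by simp
    have c: "\<bar>2 * (real n)^2 * cos (real n * t)\<bar> \<le> B2 k a"
      using cc0 r2f_bound[of k a t] unfolding cc_def by linarith
    have s: "\<bar>2 * real n * sin (real n * t)\<bar> \<le> B1 k a"
      using ss0 rf_bound[of k a t] unfolding ss_def by linarith
    have c2: "(2 * (real n)^2 * cos (real n * t))^2 \<le> (B2 k a)^2"
      using c by (rule sq_le)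
    have s2: "(2 * real n * sin (real n * t))^2 \<le> (B1 k a)^2"
      using s by (rule sq_le)
    have n1: "real n \<ge> 1" using kn by simp
    have "(2 * real n * cos (real n * t))^2 \<le> (2 * (real n)^2 * cos (real n * t))^2"
    proof -
      have "\<bar>2 * real n * cos (real n * t)\<bar> \<le> \<bar>2 * (real n)^2 * cos (real n * t)\<bar>"
        using n1 by (simp add: abs_mult power2_eq_square mult_right_mono)
      then show ?thesis by (simp only: abs_le_square_iff)
    qed
    then have "(2 * real n * cos (real n * t))^2 + (2 * real n * sin (real n * t))^2 \<le> (B1 k a)^2 + (B2 k a)^2"
      using c2 s2 by linarith
    then show False using big four_n[of "real n" "real n * t"] by linarith
  qed
  show ?thesis
  proof (cases "ss k a n t = 0")
    case True then show ?thesis using le2 unfolding x_def P_def by simp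
  next
    case False then have "\<not> order x P \<ge> 2" using s0 by blast
    then show ?thesis using False unfolding x_def P_def by simp
  qed
qed

lemma good_cell:
  assumes "lo \<le> hi" and q: "\<And>t. t \<in> {lo..hi} \<Longrightarrow> \<bar>qf k a t\<bar> < 2"
  shows "eventually (\<lambda>n. \<forall>t\<in>{lo..hi}. \<not> (ff k a n t = 0 \<and> ss k a n t = 0)) sequentially"
proof -
  have "\<exists>x\<in>{lo..hi}. \<forall>y\<in>{lo..hi}. \<bar>qf k a y\<bar> \<le> \<bar>qf k a x\<bar>"
    by (rule continuous_attains_sup) (use assms(1) in \<open>auto intro!: continuous_intros qf_cont\<close>)
  then obtain tm where tm: "tm \<in> {lo..hi}" "\<And>t. t \<in> {lo..hi} \<Longrightarrow> \<bar>qf k a t\<bar> \<le> \<bar>qf k a tm\<bar>"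
    by blast
  define M where "M = \<bar>qf k a tm\<bar>"
  have M: "M < 2" "M \<ge> 0" unfolding M_def using q tm by auto
  have "eventually (\<lambda>n. (B1 k a)^2 / (4 - M^2) < real n) sequentially" by (rule ev_real_gt)
  then show ?thesis
  proof (rule eventually_mono)
    fix n assume n: "(B1 k a)^2 / (4 - M^2) < real n"
    have M2: "M^2 < 4"
    proof -
      have "M * M \<le> M * 2" using M by (intro mult_left_mono) auto
      then show ?thesis using M by (simp add: power2_eq_square)
    qed
    show "\<forall>t\<in>{lo..hi}. \<not> (ff k a n t = 0 \<and> ss k a n t = 0)"
    proof (intro ballI notI)
      fix t assume t: "t \<in> {lo..hi}" and h: "ff k a n t = 0 \<and> ss k a n t = 0"
      have n1: "real n \<ge> 1"
      proof -
        have "(B1 k a)^2 / (4 - M^2) \<ge> 0" using M2 by simp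
        then have "real n > 0" using n by linarith
        then show ?thesis by simp
      qed
      have c: "2 * cos (real n * t) = - qf k a t" using h unfolding ff_def by linarith
      have s: "2 * real n * sin (real n * t) = - rf k a t" using h unfolding ss_def by linarith
      have q2: "(qf k a t)^2 \<le> M^2" using tm(2)[OF t] unfolding M_def by (rule sq_le)
      have r2: "(rf k a t)^2 \<le> (B1 k a)^2" using rf_bound[of k a t] by (rule sq_le)
      have "4 * (real n)^2 = (2 * real n * cos (real n * t))^2 + (2 * real n * sin (real n * t))^2"
        using four_n[of "real n" "real n * t"] by simp
      also have "(2 * real n * cos (real n * t))^2 = (real n)^2 * (qf k a t)^2"
      proof -
        have "real n * (2 * cos (real n * t)) = real n * (- qf k a t)" using c by simp
        then have "2 * real n * cos (real n * t) = real n * (- qf k a t)" by (simp only: mult.assoc mult.left_commute)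
        then show ?thesis by (simp add: power_mult_distrib)
      qed
      also have "(2 * real n * sin (real n * t))^2 = (rf k a t)^2" using s by simp
      finally have "4 * (real n)^2 = (real n)^2 * (qf k a t)^2 + (rf k a t)^2" .
      moreover have "(real n)^2 * (qf k a t)^2 \<le> (real n)^2 * M^2" using q2 by (intro mult_left_mono) auto
      ultimately have "4 * (real n)^2 \<le> (real n)^2 * M^2 + (B1 k a)^2" using r2 by linarith
      then have "(real n)^2 * (4 - M^2) \<le> (B1 k a)^2" by (simp add: algebra_simps)
      moreover have "(B1 k a)^2 < real n * (4 - M^2)" using n M2 by (simp add: pos_divide_less_eq)
      moreover have "real n * (4 - M^2) \<le> (real n)^2 * (4 - M^2)"
        using n1 M2 by (intro mult_right_mono) (auto simp: power2_eq_square)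
      ultimately show False by linarith
    qed
  qed
qed



lemma cis_inj: "inj_on cis {t. -pi < t \<and> t \<le> pi}"
proof (rule inj_onI)
  fix x y assume x: "x \<in> {t. -pi < t \<and> t \<le> pi}" and y: "y \<in> {t. -pi < t \<and> t \<le> pi}" and e: "cis x = cis y"
  have "Arg (cis x) = x" using x by (intro cis_Arg_unique) auto
  moreover have "Arg (cis x) = y" using y e by (intro cis_Arg_unique) auto
  ultimately show "x = y" by simp
qed

lemma cis_surj: assumes "norm z = 1" shows "\<exists>t. -pi < t \<and> t \<le> pi \<and> z = cis t"
proof -
  have "z \<noteq> 0" using assms by auto
  then have "cis (Arg z) = z" using cis_Arg[of z] assms by (simp add: sgn_div_norm)
  then show ?thesis using Arg_bounded[of z] by (intro exI[of _ "Arg z"]) auto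
qed

definition Zf :: "nat \<Rightarrow> (nat \<Rightarrow> int) \<Rightarrow> nat \<Rightarrow> real set" where
  "Zf k a n = {t. -pi < t \<and> t \<le> pi \<and> ff k a n t = 0}"

lemma roots_circle:
  assumes "k < n"
  shows "{z. poly (Ppoly k a n) z = 0 \<and> norm z = 1} = cis ` Zf k a n"
proof -
  have "poly (Ppoly k a n) (cis t) = 0 \<longleftrightarrow> ff k a n t = 0" for t
    using eval0[of k n a t] assms by simp
  then show ?thesis unfolding Zf_def using cis_surj by fastforce
qed

lemma Zf_finite:
  assumes "k < n" shows "finite (Zf k a n)"
proof -
  have "finite {z. poly (Ppoly k a n) z = 0}" using poly_roots_finite Ppoly_nz assms by blast
  moreover have "cis ` Zf k a n \<subseteq> {z. poly (Ppoly k a n) z = 0}" using roots_circle[OF assms, of a] by blast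
  ultimately have "finite (cis ` Zf k a n)" using finite_subset by blast
  moreover have "inj_on cis (Zf k a n)" using cis_inj by (rule inj_on_subset) (auto simp: Zf_def)
  ultimately show ?thesis using finite_imageD by blast
qed

lemma zeros_on_sum:
  assumes "k < n"
  shows "zeros_on (Ppoly k a n) = (\<Sum>t\<in>Zf k a n. order (cis t) (Ppoly k a n))"
proof -
  define P where "P = Ppoly k a n"
  have P0: "P \<noteq> 0" unfolding P_def using Ppoly_nz assms by auto
  define F where "F = filter_mset (\<lambda>z. norm z = 1) (proots P)"
  have setF: "set_mset F = cis ` Zf k a n"
    unfolding F_def P_def using roots_circle[OF assms, of a] set_count_proots[OF P0] P_def by auto
  have cnt: "count F z = order z P" if "z \<in> set_mset F" for z
    using that P0 unfolding F_def by auto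
  have "zeros_on P = size F" unfolding zeros_on_def F_def ..
  also have "\<dots> = (\<Sum>z\<in>set_mset F. count F z)" by (rule size_multiset_overloaded_eq)
  also have "\<dots> = (\<Sum>z\<in>cis ` Zf k a n. order z P)" unfolding setF by (rule sum.cong) (use cnt setF in auto)
  also have "\<dots> = (\<Sum>t\<in>Zf k a n. order (cis t) P)"
    by (rule sum.reindex[unfolded comp_def]) (rule inj_on_subset[OF cis_inj], auto simp: Zf_def)
  finally show ?thesis unfolding P_def .
qed

lemma U_lower:
  assumes "k < n" shows "card (Zf k a n) \<le> zeros_on (Ppoly k a n)"
proof -
  have "card (Zf k a n) = (\<Sum>t\<in>Zf k a n. 1)" by simp
  also have "\<dots> \<le> (\<Sum>t\<in>Zf k a n. order (cis t) (Ppoly k a n))"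
  proof (rule sum_mono)
    fix t assume "t \<in> Zf k a n"
    then have "poly (Ppoly k a n) (cis t) = 0" using eval0[of k n a t] assms by (simp add: Zf_def)
    then show "1 \<le> order (cis t) (Ppoly k a n)" using order_root Ppoly_nz[OF assms] by (metis less_one not_less)
  qed
  finally show ?thesis using zeros_on_sum[OF assms] by simp
qed

lemma U_upper:
  assumes "k < n" and big: "4 * (real n)^2 > (B1 k a)^2 + (B2 k a)^2"
  shows "zeros_on (Ppoly k a n) \<le> card (Zf k a n) + card {t\<in>Zf k a n. ss k a n t = 0}"
proof -
  have fin: "finite (Zf k a n)" using Zf_finite[OF assms(1)] .
  have "zeros_on (Ppoly k a n) \<le> (\<Sum>t\<in>Zf k a n. 1 + (if ss k a n t = 0 then 1 else 0))"
    unfolding zeros_on_sum[OF assms(1)]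
    by (rule sum_mono, rule order_bound[OF assms(1) big]) (simp add: Zf_def)
  also have "\<dots> = card (Zf k a n) + (\<Sum>t\<in>Zf k a n. if ss k a n t = 0 then 1 else 0)"
    unfolding sum.distrib by simp
  also have "(\<Sum>t\<in>Zf k a n. if ss k a n t = 0 then 1 else 0) = card {t\<in>Zf k a n. ss k a n t = 0}"
    using sum.inter_filter[OF fin, of "\<lambda>_. 1::nat" "\<lambda>t. ss k a n t = 0"] by simp
  finally show ?thesis .
qed

lemma zeros_total:
  "zeros_in p + zeros_on p + zeros_out p = size (proots p)"
proof -
  define M where "M = proots p"
  have "size M = size (filter_mset (\<lambda>z. norm z < 1) M) + size (filter_mset (\<lambda>z. \<not> norm z < 1) M)"
    by (metis multiset_partition size_union)
  moreover have "size (filter_mset (\<lambda>z. \<not> norm z < 1) M) = size (filter_mset (\<lambda>z. norm z = 1) M) + size (filter_mset (\<lambda>z. norm z > 1) M)"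
  proof -
    have "filter_mset (\<lambda>z. \<not> norm z < 1) M = filter_mset (\<lambda>z. norm z = 1) (filter_mset (\<lambda>z. \<not> norm z < 1) M)
       + filter_mset (\<lambda>z. \<not> norm z = 1) (filter_mset (\<lambda>z. \<not> norm z < 1) M)"
      by (rule multiset_partition)
    also have "\<dots> = filter_mset (\<lambda>z. norm z = 1) M + filter_mset (\<lambda>z. norm z > 1) M"
      unfolding filter_filter_mset by (intro arg_cong2[where f="(+)"] filter_mset_cong) auto
    finally show ?thesis by simp
  qed
  ultimately show ?thesis unfolding zeros_in_def zeros_on_def zeros_out_def M_def by simp
qed

lemma zeros_total_P:
  assumes "k < n" shows "zeros_in (Ppoly k a n) + zeros_out (Ppoly k a n) = 2*n - zeros_on (Ppoly k a n)"
  using zeros_total[of "Ppoly k a n"] size_proots_complex degree_Ppoly[OF assms] by simp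



definition lo :: "nat \<Rightarrow> nat \<Rightarrow> real" where "lo N i = -pi + real i * (2*pi/real N)"
definition hi :: "nat \<Rightarrow> nat \<Rightarrow> real" where "hi N i = lo N i + 2*pi/real N"

definition cellZ :: "nat \<Rightarrow> (nat \<Rightarrow> int) \<Rightarrow> nat \<Rightarrow> nat \<Rightarrow> nat \<Rightarrow> real set" where
  "cellZ k a n N i = {t\<in>Zf k a n. lo N i < t \<and> t \<le> hi N i}"

lemma suc_mult: "real (Suc i) * x = real i * x + (x::real)"
  by (simp add: algebra_simps)

lemma hi_lo: "N > 0 \<Longrightarrow> hi N i - lo N i = 2*pi/real N"
  unfolding hi_def by simp

lemma lo_lt_hi: "N > 0 \<Longrightarrow> lo N i < hi N i"
  unfolding hi_def by simp

lemma cell_range: "N > 0 \<Longrightarrow> i < N \<Longrightarrow> -pi \<le> lo N i \<and> hi N i \<le> pi"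
proof -
  assume N: "N > 0" "i < N"
  have "real i * (2*pi/real N) \<ge> 0" by simp
  moreover have "real (Suc i) * (2*pi/real N) \<le> real N * (2*pi/real N)"
    using N by (intro mult_right_mono) auto
  moreover have "hi N i = -pi + real (Suc i) * (2*pi/real N)" unfolding hi_def lo_def suc_mult by simp
  moreover have "real N * (2*pi/real N) = 2*pi" using N by simp
  ultimately show ?thesis unfolding lo_def by linarith
qed

lemma cell_index:
  assumes N: "N > 0" and t: "-pi < t" "t \<le> pi"
  shows "\<exists>i<N. lo N i < t \<and> t \<le> hi N i"
proof -
  define H where "H = 2*pi/real N"
  have H: "H > 0" unfolding H_def using N by simp
  define c where "c = \<lceil>(t+pi)/H\<rceil>"
  have c1: "c \<ge> 1" unfolding c_def using t H by (simp add: one_le_ceiling)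
  have "(t+pi)/H \<le> real N" using t H N unfolding H_def by (simp add: field_simps)
  then have c2: "c \<le> int N" unfolding c_def by (simp add: ceiling_le_iff)
  define i where "i = nat (c - 1)"
  have ii: "real i = of_int c - 1" unfolding i_def using c1 by simp
  have "of_int c - 1 < (t+pi)/H" "(t+pi)/H \<le> of_int c" unfolding c_def by linarith+
  then have "real i < (t+pi)/H" "(t+pi)/H \<le> real i + 1" using ii by linarith+
  then have "real i * H < t + pi" "t + pi \<le> (real i + 1) * H" using H by (simp_all add: field_simps)
  then have "lo N i < t" "t \<le> hi N i" unfolding lo_def hi_def H_def[symmetric] by (simp_all add: algebra_simps)
  moreover have "i < N" unfolding i_def using c1 c2 by simp
  ultimately show ?thesis by blast
qed

lemma cells_card:
  assumes N: "N > 0" and kn: "k < n"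
  shows "card {t\<in>Zf k a n. Q t} = (\<Sum>i<N. card {t\<in>cellZ k a n N i. Q t})"
proof -
  have eq: "{t\<in>Zf k a n. Q t} = (\<Union>i<N. {t\<in>cellZ k a n N i. Q t})"
  proof
    show "{t\<in>Zf k a n. Q t} \<subseteq> (\<Union>i<N. {t\<in>cellZ k a n N i. Q t})"
    proof
      fix t assume "t \<in> {t\<in>Zf k a n. Q t}"
      then have t: "t \<in> Zf k a n" "Q t" by auto
      then have "-pi < t" "t \<le> pi" unfolding Zf_def by auto
      then obtain i where "i < N" "lo N i < t \<and> t \<le> hi N i" using cell_index N by blast
      then show "t \<in> (\<Union>i<N. {t\<in>cellZ k a n N i. Q t})" using t unfolding cellZ_def by auto
    qed
  qed (auto simp: cellZ_def)
  have fin: "finite (Zf k a n)" using Zf_finite[OF kn] .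
  have disj: "{t\<in>cellZ k a n N i. Q t} \<inter> {t\<in>cellZ k a n N j. Q t} = {}" if "i < N" "j < N" "i \<noteq> j" for i j
  proof -
    have *: False if "t \<in> cellZ k a n N i" "t \<in> cellZ k a n N j" "i < j" for t i j
    proof -
      have "hi N i \<le> lo N j"
      proof -
        have "real (Suc i) * (2*pi/real N) \<le> real j * (2*pi/real N)" using that N by (intro mult_right_mono) auto
        then show ?thesis unfolding lo_def hi_def suc_mult by simp
      qed
      moreover have "t \<le> hi N i" "lo N j < t" using that(1,2) unfolding cellZ_def by auto
      ultimately show False by linarith
    qed
    show ?thesis
    proof (rule ccontr)
      assume "\<not> ?thesis"
      then obtain t where t: "t \<in> cellZ k a n N i" "t \<in> cellZ k a n N j" by blast
      from that(3) have "i < j \<or> j < i" by auto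
      then show False using * t by blast
    qed
  qed
  show ?thesis unfolding eq
    by (rule card_UN_disjoint) (use fin disj in \<open>auto simp: cellZ_def\<close>)
qed

lemma cell_upper:
  assumes N: "N > 0" and kn: "k < n" and b1: "B1 k a \<le> real n" and b2: "B2 k a < (real n)^2"
  shows "real (card (cellZ k a n N i)) \<le> 2*real n/real N + 3"
    and "real (card {t\<in>cellZ k a n N i. ss k a n t = 0}) \<le> 2*real n/real N + 2"
proof -
  define S where "S = {x\<in>{lo N i..hi N i}. ss k a n x = 0}"
  have npos: "real n > 0" using kn by simp
  have sc: "finite S \<and> real (card S) \<le> real n * (hi N i - lo N i) / pi + 2"
    unfolding S_def
  proof (rule sep_count[of "real n" "ss k a n" "cc k a n" "rf k a" "r2f k a"])
    show "\<And>x. (ss k a n has_real_derivative cc k a n x) (at x)" by (rule ss_deriv)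
    show "\<And>x. ss k a n x = 2 * real n * sin (real n * x) + rf k a x" by (simp add: ss_def)
    show "\<And>x. cc k a n x = 2 * (real n)^2 * cos (real n * x) + r2f k a x" by (simp add: cc_def)
    show "\<And>x. \<bar>rf k a x\<bar> \<le> real n" using rf_bound b1 order_trans by blast
    show "\<And>x. \<bar>r2f k a x\<bar> < (real n)^2" using r2f_bound b2 le_less_trans by blast
    show "lo N i \<le> hi N i" using lo_lt_hi[OF N] less_imp_le by blast
    show "0 < real n" by (rule npos)
  qed
  have e: "real n * (hi N i - lo N i) / pi = 2*real n/real N" using hi_lo[OF N] by simp
  have S: "finite S" "real (card S) \<le> 2*real n/real N + 2" using sc e by auto
  have "card (cellZ k a n N i) \<le> card {x\<in>{lo N i..hi N i}. (\<lambda>x. - ss k a n x) x = 0} + 1"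
  proof (rule rolle_count[where f="ff k a n"])
    show "\<And>x. (ff k a n has_real_derivative - ss k a n x) (at x)" by (rule ff_deriv)
    show "finite {x\<in>{lo N i..hi N i}. - ss k a n x = 0}" using S(1) unfolding S_def by simp
    show "finite (cellZ k a n N i)" unfolding cellZ_def using Zf_finite[OF kn] by simp
    show "cellZ k a n N i \<subseteq> {lo N i..hi N i}" unfolding cellZ_def by auto
    show "\<And>x. x \<in> cellZ k a n N i \<Longrightarrow> ff k a n x = 0" unfolding cellZ_def Zf_def by auto
  qed
  then have "card (cellZ k a n N i) \<le> card S + 1" unfolding S_def by simp
  then show "real (card (cellZ k a n N i)) \<le> 2*real n/real N + 3" using S(2) by linarith
  have "card {t\<in>cellZ k a n N i. ss k a n t = 0} \<le> card S"
    by (rule card_mono[OF S(1)]) (auto simp: S_def cellZ_def)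
  then show "real (card {t\<in>cellZ k a n N i. ss k a n t = 0}) \<le> 2*real n/real N + 2" using S(2) by linarith
qed

lemma cell_lower:
  assumes N: "N > 0" and i: "i < N" and kn: "k < n"
    and good: "\<And>t. t \<in> {lo N i..hi N i} \<Longrightarrow> \<bar>qf k a t\<bar> < 2"
  shows "real (card (cellZ k a n N i)) \<ge> 2*real n/real N - 2"
proof -
  have npos: "real n > 0" using kn by simp
  obtain Y where Y: "Y \<subseteq> {x\<in>{lo N i<..<hi N i}. ff k a n x = 0}" "finite Y"
    "real (card Y) \<ge> real n * (hi N i - lo N i)/pi - 2"
    using sign_count[where F="ff k a n" and q="qf k a" and c="real n" and \<alpha>="lo N i" and \<beta>="hi N i"]
      npos good qf_cont by (auto simp: ff_def)
  have "Y \<subseteq> cellZ k a n N i" using Y(1) cell_range[OF N i] unfolding cellZ_def Zf_def by auto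
  then have "card Y \<le> card (cellZ k a n N i)"
    by (rule card_mono[rotated]) (simp add: cellZ_def Zf_finite[OF kn])
  moreover have "real n * (hi N i - lo N i) / pi = 2*real n/real N" using hi_lo[OF N] by simp
  ultimately show ?thesis using Y(3) by linarith
qed

lemma cell_bad:
  assumes bad: "\<And>t. t \<in> {lo N i..hi N i} \<Longrightarrow> \<bar>qf k a t\<bar> > 2"
  shows "cellZ k a n N i = {}"
proof -
  have "ff k a n t \<noteq> 0" if "t \<in> {lo N i..hi N i}" for t
  proof -
    have "\<bar>cos (real n * t)\<bar> \<le> 1" by (rule abs_cos_le_one)
    then have "\<bar>2 * cos (real n * t)\<bar> \<le> 2" by (simp add: abs_mult)
    then show ?thesis using bad[OF that] unfolding ff_def by linarith
  qed
  then show ?thesis unfolding cellZ_def Zf_def by auto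
qed



definition good :: "nat \<Rightarrow> (nat \<Rightarrow> int) \<Rightarrow> nat \<Rightarrow> nat \<Rightarrow> bool" where
  "good k a N i = (\<forall>t\<in>{lo N i..hi N i}. \<bar>qf k a t\<bar> < 2)"
definition bad :: "nat \<Rightarrow> (nat \<Rightarrow> int) \<Rightarrow> nat \<Rightarrow> nat \<Rightarrow> bool" where
  "bad k a N i = (\<forall>t\<in>{lo N i..hi N i}. \<bar>qf k a t\<bar> > 2)"
definition Zq :: "nat \<Rightarrow> (nat \<Rightarrow> int) \<Rightarrow> real set" where
  "Zq k a = {t\<in>{-pi..pi}. \<bar>qf k a t\<bar> = 2}"

lemma mixed_point:
  assumes "\<not> good k a N i" "\<not> bad k a N i"
  shows "\<exists>t\<in>{lo N i..hi N i}. \<bar>qf k a t\<bar> = 2"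
proof -
  obtain t1 where t1: "t1 \<in> {lo N i..hi N i}" "\<bar>qf k a t1\<bar> \<ge> 2" using assms(1) unfolding good_def by force
  obtain t2 where t2: "t2 \<in> {lo N i..hi N i}" "\<bar>qf k a t2\<bar> \<le> 2" using assms(2) unfolding bad_def by force
  have cont: "continuous_on S (\<lambda>t. \<bar>qf k a t\<bar>)" for S by (intro continuous_intros qf_cont)
  show ?thesis
  proof (cases "t1 \<le> t2")
    case True
    obtain x where "t1 \<le> x" "x \<le> t2" "\<bar>qf k a x\<bar> = 2"
      using IVT2'[of "\<lambda>t. \<bar>qf k a t\<bar>" t2 2 t1] True t1 t2 cont by auto
    then show ?thesis using t1 t2 by (intro bexI[of _ x]) auto
  next
    case False
    obtain x where "t2 \<le> x" "x \<le> t1" "\<bar>qf k a x\<bar> = 2"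
      using IVT'[of "\<lambda>t. \<bar>qf k a t\<bar>" t2 2 t1] False t1 t2 cont by auto
    then show ?thesis using t1 t2 by (intro bexI[of _ x]) auto
  qed
qed

lemma mixed_card:
  assumes N: "N > 0" and fin: "finite (Zq k a)"
  shows "card {i\<in>{..<N}. \<not> good k a N i \<and> \<not> bad k a N i} \<le> 2 * card (Zq k a)"
proof -
  define H where "H = 2*pi/real N"
  have H: "H > 0" unfolding H_def using N by simp
  define idx where "idx t = nat \<lfloor>(t+pi)/H\<rfloor>" for t
  have sub: "{i\<in>{..<N}. \<not> good k a N i \<and> \<not> bad k a N i} \<subseteq> (\<Union>t\<in>Zq k a. {idx t, idx t - 1})"
  proof
    fix i assume "i \<in> {i\<in>{..<N}. \<not> good k a N i \<and> \<not> bad k a N i}"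
    then have i: "i < N" "\<not> good k a N i" "\<not> bad k a N i" by auto
    obtain t where t: "t \<in> {lo N i..hi N i}" "\<bar>qf k a t\<bar> = 2" using mixed_point[OF i(2,3)] by blast
    have tZ: "t \<in> Zq k a" using t cell_range[OF N i(1)] unfolding Zq_def by auto
    have "real i * H \<le> t + pi" "t + pi \<le> real i * H + H" using t unfolding lo_def hi_def H_def by auto
    then have r: "real i \<le> (t+pi)/H" "(t+pi)/H \<le> real i + 1" using H by (simp_all add: field_simps)
    have "\<lfloor>(t+pi)/H\<rfloor> = int i \<or> \<lfloor>(t+pi)/H\<rfloor> = int i + 1"
    proof (cases "(t+pi)/H < real i + 1")
      case True then have "\<lfloor>(t+pi)/H\<rfloor> = int i" using r by (simp add: floor_eq_iff)
      then show ?thesis by simp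
    next
      case False then have "(t+pi)/H = real i + 1" using r by simp
      then have "\<lfloor>(t+pi)/H\<rfloor> = int i + 1" by simp
      then show ?thesis by simp
    qed
    then have "i = idx t \<or> i = idx t - 1" unfolding idx_def by auto
    then show "i \<in> (\<Union>t\<in>Zq k a. {idx t, idx t - 1})" using tZ by blast
  qed
  have "card {i\<in>{..<N}. \<not> good k a N i \<and> \<not> bad k a N i} \<le> card (\<Union>t\<in>Zq k a. {idx t, idx t - 1})"
    by (rule card_mono) (use fin sub in auto)
  also have "\<dots> \<le> (\<Sum>t\<in>Zq k a. card {idx t, idx t - 1})" by (rule card_UN_le[OF fin])
  also have "\<dots> \<le> (\<Sum>t\<in>Zq k a. 2)" by (rule sum_mono) (simp add: card_insert_le_m1)
  finally show ?thesis by simp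
qed

definition Qc :: "nat \<Rightarrow> (nat \<Rightarrow> int) \<Rightarrow> real \<Rightarrow> complex poly" where
  "Qc k a c = Ppoly k a k - monom 1 (2*k) - 1 - monom (complex_of_real c) k"

lemma poly_Qc: "poly (Qc k a c) (cis t) = cis t ^ k * complex_of_real (qf k a t - c)"
proof -
  have e: "cis t ^ (2*k) = cis t ^ k * cis (real k * t)" "(1::complex) = cis t ^ k * cis (- (real k * t))"
    using cis_pow_split(3,4)[OF le_refl[of k]] by auto
  have "poly (Qc k a c) (cis t) = cis t ^ k * complex_of_real (ff k a k t) - cis t ^ (2*k) - 1 - complex_of_real c * cis t ^ k"
    unfolding Qc_def using eval0[of k k a t] by (simp add: poly_monom)
  also have "\<dots> = cis t ^ k * (complex_of_real (ff k a k t) - (cis (real k * t) + cis (- (real k * t))) - complex_of_real c)"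
    by (simp only: right_diff_distrib distrib_left e(1) e(2)[symmetric] mult.commute[of "complex_of_real c"])
       (simp add: algebra_simps)
  also have "\<dots> = cis t ^ k * complex_of_real (qf k a t - c)" unfolding cis_pm ff_def by simp
  finally show ?thesis .
qed

lemma Qc_nz:
  assumes j0: "j0 \<in> {1..k}" "a j0 \<noteq> 0"
  shows "Qc k a c \<noteq> 0"
proof -
  have "coeff (Qc k a c) (k + j0) = of_int (a j0)"
  proof -
    have s1: "(\<Sum>j = 1..k. (if k + j = k + j0 then (of_int (a j) :: complex) else 0)) = of_int (a j0)"
      using j0 by (simp add: sum.delta)
    have s2: "(\<Sum>j = 1..k. (if k - j = k + j0 then (of_int (a j) :: complex) else 0)) = 0"
      using j0 by (intro sum.neutral) auto
    have "coeff (Qc k a c) (k + j0) = (if 2*k = k+j0 then 1 else 0) + (\<Sum>j = 1..k. (if k + j = k + j0 then (of_int (a j) :: complex) else 0))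
       + (\<Sum>j = 1..k. (if k - j = k + j0 then (of_int (a j) :: complex) else 0)) - (if 2*k = k+j0 then 1 else 0)"
      unfolding Qc_def Ppoly_def using j0 by (simp add: coeff_sum sum.distrib coeff_1 split: if_splits)
    then show ?thesis using s1 s2 by simp
  qed
  then show ?thesis using j0 by auto
qed

lemma level_finite:
  assumes j0: "j0 \<in> {1..k}" "a j0 \<noteq> 0"
  shows "finite {t\<in>{-pi..pi}. qf k a t = c}"
proof -
  have fr: "finite {z. poly (Qc k a c) z = 0}" using poly_roots_finite Qc_nz[of j0 k a c, OF j0] by blast
  have sub: "cis ` {t. -pi < t \<and> t \<le> pi \<and> qf k a t = c} \<subseteq> {z. poly (Qc k a c) z = 0}"
    using poly_Qc by auto
  have "inj_on cis {t. -pi < t \<and> t \<le> pi \<and> qf k a t = c}" by (rule inj_on_subset[OF cis_inj]) auto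
  then have "finite {t. -pi < t \<and> t \<le> pi \<and> qf k a t = c}"
    using finite_imageD[OF finite_subset[OF sub fr]] by blast
  moreover have "{t\<in>{-pi..pi}. qf k a t = c} \<subseteq> insert (-pi) {t. -pi < t \<and> t \<le> pi \<and> qf k a t = c}" by auto
  ultimately show ?thesis using finite_subset by blast
qed

lemma Zq_finite:
  assumes ns: "\<not> ((\<forall>j\<in>{1..k}. a j = 0) \<and> \<bar>a 0\<bar> = 2)"
  shows "finite (Zq k a)"
proof (cases "\<forall>j\<in>{1..k}. a j = 0")
  case True
  then have "qf k a t = of_int (a 0)" for t unfolding qf_def by simp
  moreover have "\<bar>a 0\<bar> \<noteq> 2" using ns True by blast
  ultimately have "Zq k a = {}" unfolding Zq_def by auto
  then show ?thesis by simp
next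
  case False
  then obtain j0 where j0: "j0 \<in> {1..k}" "a j0 \<noteq> 0" by blast
  have "Zq k a \<subseteq> {t\<in>{-pi..pi}. qf k a t = 2} \<union> {t\<in>{-pi..pi}. qf k a t = -2}" unfolding Zq_def by auto
  then show ?thesis using level_finite[of j0 k a, OF j0] finite_subset by blast
qed

lemma special_case:
  assumes z: "\<forall>j\<in>{1..k}. a j = 0" and a0: "\<bar>a 0\<bar> = 2" and kn: "k < n"
  shows "zeros_on (Ppoly k a n) = 2*n"
proof -
  define P where "P = Ppoly k a n"
  have nz: "n > 0" using kn by simp
  have roots: "norm w = 1" if "poly P w = 0" for w
  proof -
    have "poly P w = w^(2*n) + of_int (a 0) * w^n + 1" unfolding P_def Ppoly_def using z by (simp add: poly_monom)
    also have "\<dots> = (w^n + of_int (a 0) / 2)^2"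
    proof -
      have "(a 0)^2 = 4"
      proof -
        have "(a 0)^2 = (\<bar>a 0\<bar>)^2" by simp
        also have "\<dots> = 4" using a0 by simp
        finally show ?thesis .
      qed
      then have b2: "(of_int (a 0) :: complex)^2 = 4" by (metis of_int_numeral of_int_power)
      have w2: "w^(2*n) = (w^n)^2" by (simp add: power_mult[symmetric] mult.commute)
      have "(w^n + of_int (a 0) / 2)^2 = (w^n)^2 + of_int (a 0) * w^n + (of_int (a 0))^2 / 4"
        by (simp add: power2_eq_square field_simps)
      then show ?thesis using b2 w2 by simp
    qed
    finally have "w^n = - (of_int (a 0) / 2)" using that by (simp add: add_eq_0_iff)
    then have "norm (w^n) = norm (- (of_int (a 0) / 2 :: complex))" by (rule arg_cong)
    then have "norm w ^ n = norm (of_int (a 0) / 2 :: complex)" by (simp only: norm_power norm_minus_cancel)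
    also have "\<dots> = 1" using a0 by (simp add: norm_divide)
    finally have "norm w ^ n = 1 ^ n" by simp
    then show ?thesis using power_eq_iff_eq_base[OF nz, of "norm w" 1] by simp
  qed
  have P0: "P \<noteq> 0" unfolding P_def using Ppoly_nz kn by auto
  have "filter_mset (\<lambda>z. norm z = 1) (proots P) = filter_mset (\<lambda>_. True) (proots P)"
    by (rule filter_mset_cong) (use roots P0 in auto)
  then have "zeros_on P = size (proots P)" unfolding zeros_on_def by simp
  then show ?thesis unfolding P_def using size_proots_complex degree_Ppoly[OF kn] by simp
qed



lemma conv_crit:
  fixes u :: "nat \<Rightarrow> real"
  assumes "\<And>e. e > 0 \<Longrightarrow> \<exists>c. eventually (\<lambda>n. c \<le> u n \<and> u n \<le> c + e) sequentially"
  shows "convergent u"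
proof -
  have "Cauchy u"
  proof (rule metric_CauchyI)
    fix e :: real assume e: "e > 0"
    obtain c where "eventually (\<lambda>n. c \<le> u n \<and> u n \<le> c + e/2) sequentially" using assms[of "e/2"] e by auto
    then obtain M where M: "\<And>n. n \<ge> M \<Longrightarrow> c \<le> u n \<and> u n \<le> c + e/2" by (auto simp: eventually_sequentially)
    have "dist (u m) (u n) < e" if "m \<ge> M" "n \<ge> M" for m n
      using M[OF that(1)] M[OF that(2)] e unfolding dist_real_def by (simp add: abs_less_iff; linarith)
    then show "\<exists>M. \<forall>m\<ge>M. \<forall>n\<ge>M. dist (u m) (u n) < e" by blast
  qed
  then show ?thesis using Cauchy_convergent_iff by blast
qed

lemma sum_if_card: "finite A \<Longrightarrow> (\<Sum>i\<in>A. if P i then (X::real) else 0) = real (card {i\<in>A. P i}) * X"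
  by (simp add: sum.inter_filter[symmetric])

lemma main_bounds:
  assumes N: "N > 0" and kn: "k < n" and b1: "B1 k a \<le> real n" and b2: "B2 k a < (real n)^2"
    and big: "4 * (real n)^2 > (B1 k a)^2 + (B2 k a)^2"
    and goodev: "\<forall>i\<in>{i\<in>{..<N}. good k a N i}. \<forall>t\<in>{lo N i..hi N i}. \<not> (ff k a n t = 0 \<and> ss k a n t = 0)"
  shows "real (zeros_on (Ppoly k a n)) \<ge> real (card {i\<in>{..<N}. good k a N i}) * (2*real n/real N - 2)"
    and "real (zeros_on (Ppoly k a n)) \<le> (real (card {i\<in>{..<N}. good k a N i})
            + 2 * real (card {i\<in>{..<N}. \<not> good k a N i \<and> \<not> bad k a N i})) * (2*real n/real N + 3)"
proof -
  define X where "X = 2*real n/real N"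
  have X0: "X \<ge> 0" unfolding X_def by simp
  have cz: "card (Zf k a n) = (\<Sum>i<N. card (cellZ k a n N i))"
    using cells_card[OF N kn, of a "\<lambda>_. True"] by simp
  have cs: "card {t\<in>Zf k a n. ss k a n t = 0} = (\<Sum>i<N. card {t\<in>cellZ k a n N i. ss k a n t = 0})"
    using cells_card[OF N kn, of a "\<lambda>t. ss k a n t = 0"] by simp
  have "real (card {i\<in>{..<N}. good k a N i}) * (X - 2) = (\<Sum>i<N. if good k a N i then X - 2 else 0)"
    by (simp add: sum_if_card)
  also have "\<dots> \<le> (\<Sum>i<N. real (card (cellZ k a n N i)))"
  proof (rule sum_mono)
    fix i assume i: "i \<in> {..<N}"
    show "(if good k a N i then X - 2 else 0) \<le> real (card (cellZ k a n N i))"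
      using cell_lower[OF N _ kn, of i a] i unfolding X_def good_def by auto
  qed
  also have "\<dots> = real (card (Zf k a n))" unfolding cz by simp
  also have "\<dots> \<le> real (zeros_on (Ppoly k a n))" using U_lower[OF kn, of a] by simp
  finally show "real (zeros_on (Ppoly k a n)) \<ge> real (card {i\<in>{..<N}. good k a N i}) * (2*real n/real N - 2)"
    unfolding X_def .
  have "real (zeros_on (Ppoly k a n)) \<le> real (card (Zf k a n)) + real (card {t\<in>Zf k a n. ss k a n t = 0})"
    using U_upper[OF kn big] by linarith
  also have "\<dots> = (\<Sum>i<N. real (card (cellZ k a n N i)) + real (card {t\<in>cellZ k a n N i. ss k a n t = 0}))"
    unfolding cz cs by (simp add: sum.distrib)
  also have "\<dots> \<le> (\<Sum>i<N. (if good k a N i then X + 3 else 0) + (if \<not> good k a N i \<and> \<not> bad k a N i then 2*(X+3) else 0))"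
  proof (rule sum_mono)
    fix i assume i: "i \<in> {..<N}"
    have u1: "real (card (cellZ k a n N i)) \<le> X + 3" using cell_upper(1)[OF N kn b1 b2] unfolding X_def by blast
    have u2: "real (card {t\<in>cellZ k a n N i. ss k a n t = 0}) \<le> X + 2" using cell_upper(2)[OF N kn b1 b2] unfolding X_def by blast
    show "real (card (cellZ k a n N i)) + real (card {t\<in>cellZ k a n N i. ss k a n t = 0})
       \<le> (if good k a N i then X + 3 else 0) + (if \<not> good k a N i \<and> \<not> bad k a N i then 2*(X+3) else 0)"
    proof (cases "good k a N i")
      case True
      have E: "{t\<in>cellZ k a n N i. ss k a n t = 0} = {}"
        using goodev i True unfolding cellZ_def Zf_def by auto
      show ?thesis using True u1 unfolding E by simp
    next
      case False
      show ?thesis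
      proof (cases "bad k a N i")
        case True
        then have "cellZ k a n N i = {}" using cell_bad[of N i k a n] unfolding bad_def by auto
        then show ?thesis using False True by simp
      next
        case False2: False
        then show ?thesis using False u1 u2 by simp
      qed
    qed
  qed
  also have "\<dots> = real (card {i\<in>{..<N}. good k a N i}) * (X + 3)
     + real (card {i\<in>{..<N}. \<not> good k a N i \<and> \<not> bad k a N i}) * (2*(X+3))"
    by (simp add: sum.distrib sum_if_card)
  finally show "real (zeros_on (Ppoly k a n)) \<le> (real (card {i\<in>{..<N}. good k a N i})
            + 2 * real (card {i\<in>{..<N}. \<not> good k a N i \<and> \<not> bad k a N i})) * (2*real n/real N + 3)"
    unfolding X_def by (simp add: algebra_simps)
qed

lemma nonspecial_conv:
  assumes ns: "\<not> ((\<forall>j\<in>{1..k}. a j = 0) \<and> \<bar>a 0\<bar> = 2)"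
  shows "convergent (\<lambda>n. real (zeros_on (Ppoly k a n)) / (2 * real n))"
proof (rule conv_crit)
  fix e :: real assume e: "e > 0"
  define u where "u n = real (zeros_on (Ppoly k a n)) / (2 * real n)" for n
  have finZ: "finite (Zq k a)" using Zq_finite[OF ns] .
  define Z where "Z = real (card (Zq k a))"
  define N where "N = nat \<lceil>16 * (Z + 1) / e\<rceil>"
  have Z0: "Z \<ge> 0" unfolding Z_def by simp
  have NZ: "real N \<ge> 16 * (Z + 1) / e" unfolding N_def by linarith
  have N0: "N > 0"
  proof -
    have "16 * (Z + 1) / e > 0" using e Z0 by simp
    then show ?thesis using NZ by simp
  qed
  define G where "G = real (card {i\<in>{..<N}. good k a N i})"
  define M where "M = real (card {i\<in>{..<N}. \<not> good k a N i \<and> \<not> bad k a N i})"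
  have G0: "G \<ge> 0" unfolding G_def by simp
  have M0: "M \<ge> 0" unfolding M_def by simp
  have MZ: "M \<le> 2 * Z" unfolding M_def Z_def using mixed_card[OF N0 finZ] by (simp flip: of_nat_mult)
  have MN: "2 * M / real N \<le> e/4"
  proof -
    have "16 * Z \<le> e * real N" using NZ e by (simp add: field_simps)
    then have "4 * (2 * M) \<le> e * real N" using MZ by linarith
    then show ?thesis using N0 by (simp add: field_simps)
  qed
  have ev_good: "eventually (\<lambda>n. \<forall>i\<in>{i\<in>{..<N}. good k a N i}. \<forall>t\<in>{lo N i..hi N i}. \<not> (ff k a n t = 0 \<and> ss k a n t = 0)) sequentially"
  proof (rule eventually_ball_finite)
    show "finite {i\<in>{..<N}. good k a N i}" by simp
    show "\<forall>i\<in>{i\<in>{..<N}. good k a N i}. eventually (\<lambda>n. \<forall>t\<in>{lo N i..hi N i}. \<not> (ff k a n t = 0 \<and> ss k a n t = 0)) sequentially"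
    proof
      fix i assume "i \<in> {i\<in>{..<N}. good k a N i}"
      then have g: "good k a N i" by simp
      show "eventually (\<lambda>n. \<forall>t\<in>{lo N i..hi N i}. \<not> (ff k a n t = 0 \<and> ss k a n t = 0)) sequentially"
        by (rule good_cell) (use g lo_lt_hi[OF N0, of i] in \<open>auto simp: good_def\<close>)
    qed
  qed
  define X where "X = max (real k) (max (B1 k a + 1) (max (B2 k a + 1) (max ((B1 k a)^2 + (B2 k a)^2 + 1)
      (max (4 * G / e) (3 * (G + 2*M) / e)))))"
  have ev: "eventually (\<lambda>n. X < real n \<and> (\<forall>i\<in>{i\<in>{..<N}. good k a N i}. \<forall>t\<in>{lo N i..hi N i}. \<not> (ff k a n t = 0 \<and> ss k a n t = 0))) sequentially"
    using ev_real_gt ev_good by (rule eventually_conj)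
  show "\<exists>c. eventually (\<lambda>n. c \<le> u n \<and> u n \<le> c + e) sequentially"
  proof (intro exI[of _ "G / real N - e/4"], rule eventually_mono[OF ev], elim conjE)
    fix n assume Xn: "X < real n"
      and gd: "\<forall>i\<in>{i\<in>{..<N}. good k a N i}. \<forall>t\<in>{lo N i..hi N i}. \<not> (ff k a n t = 0 \<and> ss k a n t = 0)"
    have kn: "k < n" using Xn unfolding X_def by simp
    have n1: "real n \<ge> 1" using kn by simp
    have b1: "B1 k a \<le> real n" using Xn unfolding X_def by simp
    have b2: "B2 k a < (real n)^2"
    proof -
      have "B2 k a + 1 < real n" using Xn unfolding X_def by simp
      moreover have "real n \<le> (real n)^2" using n1 by (simp add: power2_eq_square)
      ultimately show ?thesis by linarith
    qed
    have big: "4 * (real n)^2 > (B1 k a)^2 + (B2 k a)^2"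
    proof -
      have "(B1 k a)^2 + (B2 k a)^2 + 1 < real n" using Xn unfolding X_def by simp
      moreover have "real n \<le> 4 * (real n)^2" using n1 by (simp add: power2_eq_square)
      ultimately show ?thesis by linarith
    qed
    have Gn: "4 * G / e < real n" and GMn: "3 * (G + 2*M) / e < real n" using Xn unfolding X_def by simp_all
    have npos: "real n > 0" using n1 by simp
    have lowb: "real (zeros_on (Ppoly k a n)) \<ge> G * (2*real n/real N - 2)"
      using main_bounds(1)[OF N0 kn b1 b2 big gd] unfolding G_def .
    have upb: "real (zeros_on (Ppoly k a n)) \<le> (G + 2*M) * (2*real n/real N + 3)"
      using main_bounds(2)[OF N0 kn b1 b2 big gd] unfolding G_def M_def .
    have l1: "G * (2*real n/real N - 2) / (2 * real n) = G / real N - G / real n"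
      using npos N0 by (simp add: field_simps)
    have l2: "G / real n \<le> e / 4" using Gn e npos by (simp add: field_simps)
    have u1: "(G + 2*M) * (2*real n/real N + 3) / (2 * real n) = G / real N + 2 * M / real N + 3 * (G + 2*M) / (2 * real n)"
      using npos N0 by (simp add: field_simps)
    have u2: "3 * (G + 2*M) / (2 * real n) \<le> e / 2" using GMn e npos by (simp add: field_simps)
    have "u n \<ge> G * (2*real n/real N - 2) / (2 * real n)"
      unfolding u_def by (rule divide_right_mono[OF lowb]) (use npos in simp)
    then have "u n \<ge> G / real N - e/4" using l1 l2 by linarith
    moreover have "u n \<le> (G + 2*M) * (2*real n/real N + 3) / (2 * real n)"
      unfolding u_def by (rule divide_right_mono[OF upb]) (use npos in simp)
    then have "u n \<le> G / real N - e/4 + e" using u1 u2 MN by linarith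
    ultimately show "G / real N - e/4 \<le> u n \<and> u n \<le> G / real N - e/4 + e" by simp
  qed
qed

theorem theorem1:
  fixes k :: nat and a :: "nat \<Rightarrow> int"
  assumes "k > 0"
  shows "\<exists>L. ((\<lambda>n. C_prop (Ppoly k a n) n) \<longlongrightarrow> L) sequentially"
proof (cases "(\<forall>j\<in>{1..k}. a j = 0) \<and> \<bar>a 0\<bar> = 2")
  case True
  have "eventually (\<lambda>n. C_prop (Ppoly k a n) n = 0) sequentially"
  proof (rule eventually_mono[OF eventually_gt_at_top[of k]])
    fix n assume kn: "k < n"
    have "zeros_in (Ppoly k a n) + zeros_out (Ppoly k a n) = 0"
      using zeros_total_P[OF kn] special_case[of k a n] True kn by simp
    then show "C_prop (Ppoly k a n) n = 0" unfolding C_prop_def by simp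
  qed
  then have "((\<lambda>n. C_prop (Ppoly k a n) n) \<longlongrightarrow> 0) sequentially" by (rule tendsto_eventually)
  then show ?thesis by blast
next
  case False
  define u where "u n = real (zeros_on (Ppoly k a n)) / (2 * real n)" for n
  obtain L where L: "u \<longlonglongrightarrow> L" using nonspecial_conv[OF False] unfolding u_def convergent_def by blast
  have "(\<lambda>n. 1 - u n) \<longlonglongrightarrow> 1 - L" by (intro tendsto_intros L)
  moreover have "eventually (\<lambda>n. 1 - u n = C_prop (Ppoly k a n) n) sequentially"
  proof (rule eventually_mono[OF eventually_gt_at_top[of k]])
    fix n assume kn: "k < n"
    have tot: "zeros_in (Ppoly k a n) + zeros_on (Ppoly k a n) + zeros_out (Ppoly k a n) = 2*n"
      using zeros_total[of "Ppoly k a n"] size_proots_complex degree_Ppoly[OF kn] by simp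
    then have "real (zeros_in (Ppoly k a n) + zeros_out (Ppoly k a n)) = 2 * real n - real (zeros_on (Ppoly k a n))"
      using arg_cong[OF tot, of real] by simp
    moreover have "real n > 0" using kn by simp
    ultimately show "1 - u n = C_prop (Ppoly k a n) n" unfolding C_prop_def u_def by (simp add: field_simps)
  qed
  ultimately have "((\<lambda>n. C_prop (Ppoly k a n) n) \<longlongrightarrow> 1 - L) sequentially" by (rule Lim_transform_eventually)
  then show ?thesis by blast
qed

end
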